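(* Let $F$ be a vector lattice endowed with a locally solid additive convergence $\eta$, and let $(f_{\alpha})_{\alpha\in A}$ be a net in $F_{+}$. Then $H=\{h\in F:\ |h|\wedge f_{\alpha}\xrightarrow{\eta} 0_{F}\}$ is an ideal of $F$. If $\eta$ is idempotent, then $H$ is closed (i.e., the limit of every $\eta$-convergent net in $H$ lies in $H$).
   Context: A convergence structure on a vector lattice $F$ is locally solid additive if addition and $f\mapsto -f$ are continuous and whenever $|e_\alpha|\le|f_\alpha|$ for all $\alpha$ and $f_\alpha\to 0_F$, then $e_\alpha\to0_F$. A locally solid additive convergence $\eta$ is idempotent if for any nets $(f_{\alpha})_{\alpha\in A},(g_{\beta})_{\beta\in B}\subset F_{+}$ such that $g_{\beta}\xrightarrow[\beta]{\eta} 0_{F}$ and $(f_{\alpha}-g_{\beta})^{+}\xrightarrow[\alpha]{\eta} 0_{F}$ for every $\beta$, it follows that $f_{\alpha}\xrightarrow[\alpha]{\eta} 0_{F}$. *)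

theory Defs
  imports "HOL-Analysis.Analysis"
begin

definition vabs :: "'a::{ordered_real_vector,lattice} \<Rightarrow> 'a" where
  "vabs x = sup x (- x)"

definition vpos :: "'a::{ordered_real_vector,lattice} \<Rightarrow> 'a" where
  "vpos x = sup x 0"

text \<open>Convergence structures are represented by their (equivalent) filter form:
  eta F x means that the filter F converges to x.  A net (x_alpha) indexed by a
  directed set converges to x iff eta holds for its tail filter (filtermap x at_top).
  Axioms: point filters converge to their point; convergence passes to finer filters
  (this encodes: constant nets converge, subnets of convergent nets converge).\<close>

definition convergence_structure :: "('a filter \<Rightarrow> 'a \<Rightarrow> bool) \<Rightarrow> bool" where
  "convergence_structure eta \<longleftrightarrow>
     (\<forall>x. eta (principal {x}) x) \<and>
     (\<forall>F G x. F \<le> G \<longrightarrow> eta G x \<longrightarrow> eta F x)"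

text \<open>Two nets with the same index set are encoded by one filter P on pairs
  (the tail filter of alpha maps to (e_alpha, f_alpha)).\<close>

definition locally_solid_additive ::
    "('a::{ordered_real_vector,lattice} filter \<Rightarrow> 'a \<Rightarrow> bool) \<Rightarrow> bool" where
  "locally_solid_additive eta \<longleftrightarrow>
     convergence_structure eta \<and>
     (\<forall>(P :: ('a \<times> 'a) filter) x y. eta (filtermap fst P) x \<longrightarrow> eta (filtermap snd P) y \<longrightarrow>
         eta (filtermap (\<lambda>p. fst p + snd p) P) (x + y)) \<and>
     (\<forall>F x. eta F x \<longrightarrow> eta (filtermap uminus F) (- x)) \<and>
     (\<forall>P :: ('a \<times> 'a) filter.
         eventually (\<lambda>p. vabs (fst p) \<le> vabs (snd p)) P \<longrightarrow>
         eta (filtermap snd P) 0 \<longrightarrow> eta (filtermap fst P) 0)"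

text \<open>Idempotency. The net (f_alpha) is encoded by its tail filter F, the net
  (g_beta) by its tail filter G together with its range S (G is concentrated on S).\<close>

definition idempotent_conv ::
    "('a::{ordered_real_vector,lattice} filter \<Rightarrow> 'a \<Rightarrow> bool) \<Rightarrow> bool" where
  "idempotent_conv eta \<longleftrightarrow>
     (\<forall>F G S. F \<noteq> bot \<longrightarrow> G \<noteq> bot \<longrightarrow>
        eventually (\<lambda>x. 0 \<le> x) F \<longrightarrow>
        S \<subseteq> {x. 0 \<le> x} \<longrightarrow> G \<le> principal S \<longrightarrow>
        eta G 0 \<longrightarrow>
        (\<forall>y\<in>S. eta (filtermap (\<lambda>x. vpos (x - y)) F) 0) \<longrightarrow>
        eta F 0)"

definition lattice_ideal :: "'a::{ordered_real_vector,lattice} set \<Rightarrow> bool" where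
  "lattice_ideal H \<longleftrightarrow>
     0 \<in> H \<and> (\<forall>x\<in>H. \<forall>y\<in>H. x + y \<in> H) \<and> (\<forall>c x. x \<in> H \<longrightarrow> c *\<^sub>R x \<in> H) \<and>
     (\<forall>x y. y \<in> H \<longrightarrow> vabs x \<le> vabs y \<longrightarrow> x \<in> H)"

definition conv_closed :: "('a filter \<Rightarrow> 'a \<Rightarrow> bool) \<Rightarrow> 'a set \<Rightarrow> bool" where
  "conv_closed eta H \<longleftrightarrow>
     (\<forall>F x. F \<noteq> bot \<longrightarrow> eventually (\<lambda>y. y \<in> H) F \<longrightarrow> eta F x \<longrightarrow> x \<in> H)"

end

theory Submission
  imports Defs
begin

lemma vabs_nonneg: "0 \<le> vabs (z::'a::{ordered_real_vector,lattice})"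
proof -
  have "z + - z \<le> vabs z + vabs z" unfolding vabs_def by (intro add_mono) auto
  then have h: "0 \<le> vabs z + vabs z" by simp
  have "vabs z = (1/2::real) *\<^sub>R (vabs z + vabs z)"
    by (simp add: scaleR_right_distrib[symmetric] scaleR_add_left[symmetric])
  also have "0 \<le> \<dots>" using h by (intro scaleR_nonneg_nonneg) auto
  finally show ?thesis .
qed

lemma vabs_of_nonneg: "0 \<le> (z::'a::{ordered_real_vector,lattice}) \<Longrightarrow> vabs z = z"
  unfolding vabs_def
  by (metis neg_le_0_iff_le order_trans sup.absorb1)

lemma vabs_vabs: "vabs (vabs (z::'a::{ordered_real_vector,lattice})) = vabs z"
  by (simp add: vabs_of_nonneg vabs_nonneg)

lemma vabs_uminus: "vabs (- (z::'a::{ordered_real_vector,lattice})) = vabs z"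
  unfolding vabs_def by (simp add: sup_commute)

lemma vabs_triangle: "vabs ((x::'a::{ordered_real_vector,lattice}) + y) \<le> vabs x + vabs y"
proof -
  have "- (x + y) = - x + - y" by simp
  moreover have "- x + - y \<le> vabs x + vabs y" unfolding vabs_def by (intro add_mono) auto
  moreover have "x + y \<le> vabs x + vabs y" unfolding vabs_def by (intro add_mono) auto
  ultimately show ?thesis unfolding vabs_def[of "x+y"] by simp
qed

lemma add_inf_right: "inf (a::'a::{ordered_real_vector,lattice}) b + c = inf (a + c) (b + c)"
proof (rule order_antisym)
  show "inf a b + c \<le> inf (a + c) (b + c)" by (auto intro: add_right_mono)
  have "inf (a + c) (b + c) - c \<le> a" by (simp add: diff_le_eq)
  moreover have "inf (a + c) (b + c) - c \<le> b" by (simp add: diff_le_eq)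
  ultimately have "inf (a + c) (b + c) - c \<le> inf a b" by simp
  then show "inf (a + c) (b + c) \<le> inf a b + c" by (simp only: diff_le_eq)
qed

lemma inf_add_le:
  fixes a b f :: "'a::{ordered_real_vector,lattice}"
  assumes "0 \<le> a" "0 \<le> b" "0 \<le> f"
  shows "inf (a + b) f \<le> inf a f + inf b f"
proof -
  have e1: "inf a f + inf b f = inf (a + inf b f) (f + inf b f)" by (rule add_inf_right)
  have e2: "a + inf b f = inf (b + a) (f + a)"
    by (subst add.commute) (rule add_inf_right)
  have e3: "f + inf b f = inf (b + f) (f + f)"
    by (subst add.commute) (rule add_inf_right)
  have "inf (a + b) f \<le> b + a" by (simp add: add.commute le_infI1)
  moreover have "inf (a + b) f \<le> f + a" using assms(1) by (meson add_increasing2 inf_le2 order_trans)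
  moreover have "inf (a + b) f \<le> b + f" using assms(2) by (meson add_increasing inf_le2 order_trans)
  moreover have "inf (a + b) f \<le> f + f" using assms(3) by (meson add_increasing inf_le2 order_trans)
  ultimately show ?thesis unfolding e1 e2 e3 by (meson le_inf_iff)
qed

lemma key_ineq:
  fixes x h f :: "'a::{ordered_real_vector,lattice}"
  assumes "0 \<le> f"
  shows "inf (vabs x) f \<le> inf (vabs h) f + vabs (x - h)"
proof -
  have "vabs x \<le> vabs h + vabs (x - h)" using vabs_triangle[of h "x - h"] by simp
  then have "inf (vabs x) f \<le> inf (vabs h + vabs (x - h)) f" by (auto intro: le_infI1)
  also have "\<dots> \<le> inf (vabs h) f + inf (vabs (x - h)) f"
    using assms by (intro inf_add_le vabs_nonneg)
  also have "\<dots> \<le> inf (vabs h) f + vabs (x - h)" by (intro add_left_mono) simp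
  finally show ?thesis .
qed

lemma scale_sup:
  fixes x y :: "'a::{ordered_real_vector,lattice}"
  assumes "0 \<le> c"
  shows "c *\<^sub>R sup x y = sup (c *\<^sub>R x) (c *\<^sub>R y)"
proof (cases "c = 0")
  case True then show ?thesis by simp
next
  case False
  then have c: "0 < c" using assms by simp
  show ?thesis
  proof (rule order_antisym)
    have "x \<le> inverse c *\<^sub>R sup (c *\<^sub>R x) (c *\<^sub>R y)"
      using scaleR_left_mono[OF sup_ge1[of "c *\<^sub>R x" "c *\<^sub>R y"], of "inverse c"] c by simp
    moreover have "y \<le> inverse c *\<^sub>R sup (c *\<^sub>R x) (c *\<^sub>R y)"
      using scaleR_left_mono[OF sup_ge2[of "c *\<^sub>R y" "c *\<^sub>R x"], of "inverse c"] c by simp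
    ultimately have "sup x y \<le> inverse c *\<^sub>R sup (c *\<^sub>R x) (c *\<^sub>R y)" by simp
    from scaleR_left_mono[OF this, of c] c
    show "c *\<^sub>R sup x y \<le> sup (c *\<^sub>R x) (c *\<^sub>R y)" by simp
    show "sup (c *\<^sub>R x) (c *\<^sub>R y) \<le> c *\<^sub>R sup x y"
      using assms by (auto intro: scaleR_left_mono)
  qed
qed

lemma vabs_scaleR: "vabs (c *\<^sub>R (x::'a::{ordered_real_vector,lattice})) = \<bar>c\<bar> *\<^sub>R vabs x"
proof -
  have nn: "vabs (d *\<^sub>R y) = d *\<^sub>R vabs y" if "0 \<le> d" for d and y :: 'a
    using that unfolding vabs_def by (simp add: scale_sup)
  show ?thesis
  proof (cases "0 \<le> c")
    case True then show ?thesis using nn by simp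
  next
    case False
    then have "c *\<^sub>R x = (- c) *\<^sub>R (- x)" "\<bar>c\<bar> = - c" by auto
    then show ?thesis using False nn[of "-c" "-x"] vabs_uminus[of x] by simp
  qed
qed

lemma lsa_const:
  assumes "locally_solid_additive eta"
  shows "eta (filtermap (\<lambda>_. c) F) c"
proof -
  have "filtermap (\<lambda>_. c) F \<le> principal {c}"
    by (simp add: le_principal eventually_filtermap)
  then show ?thesis using assms unfolding locally_solid_additive_def convergence_structure_def
    by blast
qed

lemma lsa_add:
  assumes "locally_solid_additive eta" "eta (filtermap a F) x" "eta (filtermap b F) y"
  shows "eta (filtermap (\<lambda>t. a t + b t) F) (x + y)"
proof -
  let ?P = "filtermap (\<lambda>t. (a t, b t)) F"
  have "eta (filtermap fst ?P) x" "eta (filtermap snd ?P) y"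
    using assms(2,3) by (simp_all add: filtermap_filtermap)
  then have "eta (filtermap (\<lambda>p. fst p + snd p) ?P) (x + y)"
    using assms(1) unfolding locally_solid_additive_def by blast
  then show ?thesis by (simp add: filtermap_filtermap)
qed

lemma lsa_solid:
  assumes "locally_solid_additive eta" "eventually (\<lambda>t. vabs (a t) \<le> vabs (b t)) F"
    "eta (filtermap b F) 0"
  shows "eta (filtermap a F) 0"
proof -
  let ?P = "filtermap (\<lambda>t. (a t, b t)) F"
  have "eventually (\<lambda>p. vabs (fst p) \<le> vabs (snd p)) ?P" "eta (filtermap snd ?P) 0"
    using assms(2,3) by (simp_all add: filtermap_filtermap eventually_filtermap)
  then have "eta (filtermap fst ?P) 0"
    using assms(1) unfolding locally_solid_additive_def by blast
  then show ?thesis by (simp add: filtermap_filtermap)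
qed

lemma lsa_solid_pos:
  assumes "locally_solid_additive eta" "\<And>t. 0 \<le> a t" "\<And>t. a t \<le> b t"
    "eta (filtermap b F) 0"
  shows "eta (filtermap a F) 0"
proof (rule lsa_solid[OF assms(1) _ assms(4)])
  have "vabs (a t) \<le> vabs (b t)" for t
    using assms(2,3)[of t] by (metis order_trans vabs_of_nonneg)
  then show "eventually (\<lambda>t. vabs (a t) \<le> vabs (b t)) F" by simp
qed

lemma at_top_directed_nonbot:
  assumes "\<forall>a b::'i::order. \<exists>c. a \<le> c \<and> b \<le> c"
  shows "(at_top :: 'i filter) \<noteq> bot"
proof
  assume "(at_top :: 'i filter) = bot"
  then have "eventually (\<lambda>_. False) (at_top :: 'i filter)" by simp
  then have "\<exists>b\<in>UNIV. eventually (\<lambda>_. False) (principal {b::'i..})"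
    unfolding at_top_def
  proof (subst (asm) eventually_INF_base)
    fix a b :: 'i
    obtain c where "a \<le> c" "b \<le> c" using assms by blast
    then show "\<exists>x\<in>UNIV. principal {x..} \<le> inf (principal {a..}) (principal {b..})"
      by (intro bexI[of _ c]) auto
  qed auto
  then show False by (auto simp: eventually_principal)
qed

theorem proposition2p4:
  fixes eta :: "'a::{ordered_real_vector,lattice} filter \<Rightarrow> 'a \<Rightarrow> bool"
    and f :: "'i::order \<Rightarrow> 'a"
  assumes "locally_solid_additive eta"
    and "\<forall>a b::'i. \<exists>c. a \<le> c \<and> b \<le> c"
    and "\<forall>\<alpha>. 0 \<le> f \<alpha>"
  shows "lattice_ideal {h. eta (filtermap (\<lambda>\<alpha>. inf (vabs h) (f \<alpha>)) at_top) 0}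
       \<and> (idempotent_conv eta \<longrightarrow>
            conv_closed eta {h. eta (filtermap (\<lambda>\<alpha>. inf (vabs h) (f \<alpha>)) at_top) 0})"
proof -
  note L = assms(1)
  have f0: "0 \<le> f a" for a using assms(3) by blast
  define H where "H = {h. eta (filtermap (\<lambda>\<alpha>. inf (vabs h) (f \<alpha>)) at_top) 0}"
  have pos: "0 \<le> inf (vabs h) (f a)" for h a using f0 vabs_nonneg by simp
  have H0: "0 \<in> H"
  proof -
    have "inf (vabs 0) (f a) = 0" for a using f0[of a] by (simp add: vabs_def inf_absorb1)
    then show ?thesis unfolding H_def using lsa_const[OF L, of 0 at_top] by simp
  qed
  have Hsolid: "x \<in> H" if "y \<in> H" "vabs x \<le> vabs y" for x y
  proof -
    have le: "inf (vabs x) (f a) \<le> inf (vabs y) (f a)" for a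
      using that(2) inf_mono by blast
    have "eta (filtermap (\<lambda>\<alpha>. inf (vabs y) (f \<alpha>)) at_top) 0" using that(1) unfolding H_def by simp
    then show ?thesis unfolding H_def using lsa_solid_pos[OF L, of "\<lambda>a. inf (vabs x) (f a)" "\<lambda>a. inf (vabs y) (f a)", OF pos le] by blast
  qed
  have Hadd: "x + y \<in> H" if "x \<in> H" "y \<in> H" for x y
  proof -
    have "eta (filtermap (\<lambda>\<alpha>. inf (vabs x) (f \<alpha>) + inf (vabs y) (f \<alpha>)) at_top) (0 + 0)"
      using that unfolding H_def by (intro lsa_add[OF L]) auto
    then have c: "eta (filtermap (\<lambda>\<alpha>. inf (vabs x) (f \<alpha>) + inf (vabs y) (f \<alpha>)) at_top) 0" by simp
    have le: "inf (vabs (x + y)) (f a) \<le> inf (vabs x) (f a) + inf (vabs y) (f a)" for a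
    proof -
      have "inf (vabs (x + y)) (f a) \<le> inf (vabs x + vabs y) (f a)"
        using vabs_triangle[of x y] by (auto intro: le_infI1)
      also have "\<dots> \<le> inf (vabs x) (f a) + inf (vabs y) (f a)"
        using f0 by (intro inf_add_le vabs_nonneg)
      finally show ?thesis .
    qed
    show ?thesis unfolding H_def using lsa_solid_pos[OF L, of "\<lambda>a. inf (vabs (x + y)) (f a)"
      "\<lambda>a. inf (vabs x) (f a) + inf (vabs y) (f a)", OF pos le c] by blast
  qed
  have Hnat: "real n *\<^sub>R x \<in> H" if "x \<in> H" for n x
  proof (induction n)
    case 0 then show ?case using H0 by simp
  next
    case (Suc n)
    have "real (Suc n) *\<^sub>R x = real n *\<^sub>R x + x" by (simp add: scaleR_add_left)
    then show ?case using Hadd[OF Suc that] by simp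
  qed
  have Hscale: "c *\<^sub>R x \<in> H" if "x \<in> H" for c x
  proof -
    obtain n :: nat where n: "\<bar>c\<bar> \<le> real n" using real_arch_simple by blast
    have "vabs (c *\<^sub>R x) = \<bar>c\<bar> *\<^sub>R vabs x" by (rule vabs_scaleR)
    also have "\<dots> \<le> real n *\<^sub>R vabs x" using n vabs_nonneg by (intro scaleR_right_mono)
    also have "\<dots> = vabs (real n *\<^sub>R x)" by (simp add: vabs_scaleR)
    finally show ?thesis using Hsolid Hnat[OF that] by blast
  qed
  have ideal: "lattice_ideal H"
    unfolding lattice_ideal_def using H0 Hadd Hscale Hsolid by blast
  have closed: "conv_closed eta H" if idem: "idempotent_conv eta"
    unfolding conv_closed_def
  proof (intro allI impI)
    fix F x
    assume Fnb: "F \<noteq> bot" and evH: "eventually (\<lambda>y. y \<in> H) F" and conv: "eta F x"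
    define G where "G = filtermap (\<lambda>h. vabs (h - x)) F"
    define S where "S = (\<lambda>h. vabs (h - x)) ` H"
    define F' where "F' = filtermap (\<lambda>\<alpha>. inf (vabs x) (f \<alpha>)) at_top"
    have "eta (filtermap (\<lambda>h. h + - x) F) (x + - x)"
      using conv lsa_const[OF L, of "- x" F] by (intro lsa_add[OF L]) (simp_all add: filtermap_ident)
    then have "eta (filtermap (\<lambda>h. h - x) F) 0" by simp
    then have Gc: "eta G 0" unfolding G_def
      by (rule lsa_solid[OF L, rotated]) (simp add: vabs_vabs)
    have Gnb: "G \<noteq> bot" unfolding G_def using Fnb by (simp add: filtermap_bot_iff)
    have F'nb: "F' \<noteq> bot" unfolding F'_def
      using at_top_directed_nonbot[OF assms(2)] by (simp add: filtermap_bot_iff)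
    have F'pos: "eventually (\<lambda>x. 0 \<le> x) F'" unfolding F'_def
      by (simp add: eventually_filtermap f0 vabs_nonneg)
    have Spos: "S \<subseteq> {x. 0 \<le> x}" unfolding S_def using vabs_nonneg by auto
    have GS: "G \<le> principal S" unfolding G_def S_def le_principal eventually_filtermap
      using evH by (rule eventually_mono) auto
    have Sc: "\<forall>y\<in>S. eta (filtermap (\<lambda>z. vpos (z - y)) F') 0"
    proof
      fix y assume "y \<in> S"
      then obtain h where h: "h \<in> H" "y = vabs (h - x)" unfolding S_def by blast
      have b: "vpos (inf (vabs x) (f a) - y) \<le> inf (vabs h) (f a)" for a
      proof -
        have "inf (vabs x) (f a) \<le> inf (vabs h) (f a) + vabs (x - h)"
          using f0 by (rule key_ineq)
        moreover have "vabs (x - h) = y" using h(2) vabs_uminus[of "h - x"] by simp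
        ultimately have "inf (vabs x) (f a) \<le> inf (vabs h) (f a) + y" by simp
        then have "inf (vabs x) (f a) - y \<le> inf (vabs h) (f a)"
          by (simp only: diff_le_eq)
        then show ?thesis unfolding vpos_def using pos by simp
      qed
      have "eta (filtermap (\<lambda>a. vpos (inf (vabs x) (f a) - y)) at_top) 0"
      proof (rule lsa_solid_pos[OF L, of _ "\<lambda>a. inf (vabs h) (f a)"])
        show "0 \<le> vpos (inf (vabs x) (f a) - y)" for a by (simp add: vpos_def)
        show "vpos (inf (vabs x) (f a) - y) \<le> inf (vabs h) (f a)" for a by (rule b)
        show "eta (filtermap (\<lambda>a. inf (vabs h) (f a)) at_top) 0" using h(1) unfolding H_def by simp
      qed
      then show "eta (filtermap (\<lambda>z. vpos (z - y)) F') 0"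
        unfolding F'_def by (simp add: filtermap_filtermap)
    qed
    have "eta F' 0"
      using idem F'nb Gnb F'pos Spos GS Gc Sc unfolding idempotent_conv_def by blast
    then show "x \<in> H" unfolding F'_def H_def by simp
  qed
  show ?thesis using ideal closed unfolding H_def by blast
qed

end
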